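(* Let $P=(T;U,V)$ be a 3M-DAP with $r_v := s_u u - (t-2)s_t - (v-2)s_v > 0$ and such that $b^* := 2s_v/r_v$ is an integer. Then $f(P) = x_u/u$, and there exists an optimal feasible solution in which every entry of $V$ is strictly greater than $x_u/u$.
   Context: A three-matrix division and assignment problem (3M-DAP) $P=(T;U,V)$ is specified by integers $t,u,v$ (numbers of columns), integers $s_t, s_u, s_v$ (numbers of rows) and rationals $x_t, x_u, x_v$ (required row sums), subject to: $t \ge 2$, $u \ge 2$, $v \ge 1$; if $v = 1$ then $v s_v \le (t-2)s_t$; $s_t > 0$, $s_u > 0$, $s_v \ge 0$; $s_u u + s_v v = s_t t$; $s_u x_u + s_v x_v = s_t x_t$; and $x_u/u < x_v/v$. A feasible solution assigns real values to the entries of an $s_t\times t$ matrix $T$, an $s_u \times u$ matrix $U$ and an $s_v \times v$ matrix $V$ so that every row of $T$, $U$, $V$ sums to $x_t$, $x_u$, $x_v$ respectively, and the multiset of entries of $T$ equals the multiset union of the entries of $U$ and $V$. $f(P)$ is the maximum, over feasible solutions, of the smallest entry of $T$; a feasible solution attaining it is optimal. *)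

theory Defs
  imports Complex_Main "HOL-Library.Multiset"
begin

text \<open>A 3M-DAP P = (T;U,V) is given by the column numbers t u v, row numbers st su sv
  and rational row sums xt xu xv. Matrices are functions nat => nat => real,
  indexed by row i < (number of rows) and column j < (number of columns).\<close>

definition is_3MDAP ::
  "nat \<Rightarrow> nat \<Rightarrow> nat \<Rightarrow> nat \<Rightarrow> nat \<Rightarrow> nat \<Rightarrow> rat \<Rightarrow> rat \<Rightarrow> rat \<Rightarrow> bool" where
  "is_3MDAP t u v st su sv xt xu xv \<longleftrightarrow>
     t \<ge> 2 \<and> u \<ge> 2 \<and> v \<ge> 1 \<and>
     (v = 1 \<longrightarrow> v * sv \<le> (t - 2) * st) \<and>
     st > 0 \<and> su > 0 \<and>
     su * u + sv * v = st * t \<and>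
     of_nat su * xu + of_nat sv * xv = of_nat st * xt \<and>
     xu / of_nat u < xv / of_nat v"

definition entries :: "nat \<Rightarrow> nat \<Rightarrow> (nat \<Rightarrow> nat \<Rightarrow> real) \<Rightarrow> real multiset" where
  "entries s c M = image_mset (\<lambda>(i, j). M i j) (mset_set ({0..<s} \<times> {0..<c}))"

definition rows_sum :: "nat \<Rightarrow> nat \<Rightarrow> (nat \<Rightarrow> nat \<Rightarrow> real) \<Rightarrow> real \<Rightarrow> bool" where
  "rows_sum s c M x \<longleftrightarrow> (\<forall>i<s. (\<Sum>j<c. M i j) = x)"

definition feasible_3MDAP ::
  "nat \<Rightarrow> nat \<Rightarrow> nat \<Rightarrow> nat \<Rightarrow> nat \<Rightarrow> nat \<Rightarrow> rat \<Rightarrow> rat \<Rightarrow> rat \<Rightarrow>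
   (nat \<Rightarrow> nat \<Rightarrow> real) \<Rightarrow> (nat \<Rightarrow> nat \<Rightarrow> real) \<Rightarrow> (nat \<Rightarrow> nat \<Rightarrow> real) \<Rightarrow> bool" where
  "feasible_3MDAP t u v st su sv xt xu xv T U V \<longleftrightarrow>
     rows_sum st t T (real_of_rat xt) \<and>
     rows_sum su u U (real_of_rat xu) \<and>
     rows_sum sv v V (real_of_rat xv) \<and>
     entries st t T = entries su u U + entries sv v V"

definition min_entry :: "nat \<Rightarrow> nat \<Rightarrow> (nat \<Rightarrow> nat \<Rightarrow> real) \<Rightarrow> real" where
  "min_entry s c M = Min ((\<lambda>(i, j). M i j) ` ({0..<s} \<times> {0..<c}))"

definition f_3MDAP ::
  "nat \<Rightarrow> nat \<Rightarrow> nat \<Rightarrow> nat \<Rightarrow> nat \<Rightarrow> nat \<Rightarrow> rat \<Rightarrow> rat \<Rightarrow> rat \<Rightarrow> real" where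
  "f_3MDAP t u v st su sv xt xu xv =
     (GREATEST m. \<exists>T U V. feasible_3MDAP t u v st su sv xt xu xv T U V \<and>
                            m = min_entry st t T)"

definition optimal_3MDAP ::
  "nat \<Rightarrow> nat \<Rightarrow> nat \<Rightarrow> nat \<Rightarrow> nat \<Rightarrow> nat \<Rightarrow> rat \<Rightarrow> rat \<Rightarrow> rat \<Rightarrow>
   (nat \<Rightarrow> nat \<Rightarrow> real) \<Rightarrow> (nat \<Rightarrow> nat \<Rightarrow> real) \<Rightarrow> (nat \<Rightarrow> nat \<Rightarrow> real) \<Rightarrow> bool" where
  "optimal_3MDAP t u v st su sv xt xu xv T U V \<longleftrightarrow>
     feasible_3MDAP t u v st su sv xt xu xv T U V \<and>
     min_entry st t T = f_3MDAP t u v st su sv xt xu xv"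

end

theory Submission
  imports Defs
begin


lemma entries_Suc: "entries (Suc s) c M = entries s c M + image_mset (M s) (mset_set {0..<c})"
proof -
  have "{0..<Suc s} \<times> {0..<c} = ({0..<s} \<times> {0..<c}) \<union> ({s} \<times> {0..<c})" by auto
  moreover have "({0..<s} \<times> {0..<c}) \<inter> ({s} \<times> {0..<c}) = {}" by auto
  ultimately have "mset_set ({0..<Suc s} \<times> {0..<c}) = mset_set ({0..<s} \<times> {0..<c}) + mset_set ({s} \<times> {0..<c})"
    by (simp add: mset_set_Union)
  moreover have "image_mset (\<lambda>(i, j). M i j) (mset_set ({s} \<times> {0..<c})) = image_mset (M s) (mset_set {0..<c})"
  proof -
    have "{s} \<times> {0..<c} = (\<lambda>j. (s,j)) ` {0..<c}" by auto
    then have "mset_set ({s} \<times> {0..<c}) = image_mset (\<lambda>j. (s,j)) (mset_set {0..<c})"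
      by (simp add: image_mset_mset_set inj_on_def)
    then show ?thesis by (simp add: multiset.map_comp comp_def)
  qed
  ultimately show ?thesis unfolding entries_def by simp
qed

lemma entries_sum: "entries s c M = (\<Sum>i<s. image_mset (M i) (mset_set {0..<c}))"
proof (induction s)
  case 0 then show ?case by (simp add: entries_def)
next
  case (Suc s) then show ?case by (simp only: entries_Suc) simp
qed

lemma entries_list:
  assumes "\<And>i. i < s \<Longrightarrow> length (L i) = c"
  shows "entries s c (\<lambda>i q. L i ! q) = (\<Sum>i<s. mset (L i))"
  unfolding entries_sum
proof (rule sum.cong)
  fix i assume "i \<in> {..<s}"
  then have l: "length (L i) = c" using assms by simp
  have "image_mset (\<lambda>q. L i ! q) (mset_set {0..<c}) = mset (map (\<lambda>q. L i ! q) [0..<c])"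
    by (simp only: mset_map mset_upt)
  also have "map (\<lambda>q. L i ! q) [0..<c] = L i" using l map_nth[of "L i"] by simp
  then have "mset (map (\<lambda>q. L i ! q) [0..<c]) = mset (L i)" by simp
  finally show "image_mset (\<lambda>q. L i ! q) (mset_set {0..<c}) = mset (L i)" .
qed simp

lemma rowsum_list: "length L = c \<Longrightarrow> (\<Sum>q<c. L ! q) = sum_list L"
  by (simp add: sum_list_sum_nth atLeast0LessThan)

lemma sum_mod_blocks: "(\<Sum>i<d*m. f (i mod m)) = (\<Sum>k<d. \<Sum>r<m. f r)" for f :: "nat \<Rightarrow> 'a::comm_monoid_add"
proof (induction d)
  case 0 then show ?case by simp
next
  case (Suc d)
  have "{..<Suc d * m} = {..<d*m} \<union> {d*m..<d*m+m}" by auto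
  then have "(\<Sum>i<Suc d*m. f (i mod m)) = (\<Sum>i<d*m. f (i mod m)) + (\<Sum>i\<in>{d*m..<d*m+m}. f (i mod m))"
    by (simp add: sum.union_disjoint ivl_disj_int)
  also have "(\<Sum>i\<in>{d*m..<d*m+m}. f (i mod m)) = (\<Sum>r<m. f r)"
  proof -
    have "(\<Sum>i\<in>{d*m..<d*m+m}. f (i mod m)) = (\<Sum>r\<in>{0..<m}. f ((r + d*m) mod m))"
      using sum.shift_bounds_nat_ivl[of "\<lambda>i. f (i mod m)" 0 "d*m" m] by (simp add: add.commute)
    also have "\<dots> = (\<Sum>r<m. f r)" by (simp add: atLeast0LessThan)
    finally show ?thesis .
  qed
  finally show ?case using Suc by simp
qed

lemma replicate_mset_add: "replicate_mset (m+n) x = replicate_mset m x + replicate_mset n x"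
  by (induction m) simp_all

lemma sum_replicate: "(\<Sum>i<n. replicate_mset k x) = replicate_mset (n*k) x"
  by (induction n) (simp_all add: replicate_mset_add add.commute)

lemma entries_set: "(\<lambda>(i,j). M i j) ` ({0..<s}\<times>{0..<c}) = set_mset (entries s c M)"
  unfolding entries_def by simp

lemma min_entry_set: "min_entry s c M = Min (set_mset (entries s c M))"
  unfolding min_entry_def entries_set ..

lemma entries_const: "entries s c (\<lambda>_ _. a) = replicate_mset (s*c) a"
proof -
  have "(\<lambda>(i::nat,j::nat). a) = (\<lambda>_. a)" by auto
  then show ?thesis unfolding entries_def by (simp add: image_mset_const_eq)
qed



lemma setup_bd:
  fixes t u v st su sv :: nat
  assumes "v \<ge> 1" "su*u + sv*v = st*t"
    and "int su * int u - (int t - 2) * int st - (int v - 2) * int sv > 0"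
    and "2 * real sv / real_of_int (int su * int u - (int t - 2) * int st - (int v - 2) * int sv) \<in> \<int>"
  shows "\<exists>b d. d > 0 \<and> sv = b*d \<and> st = d*(b*(v-1)+1)"
proof -
  define D where "D = int st + int sv - int v * int sv"
  have hs: "int su * int u = int st * int t - int sv * int v" using assms(2)
    by (metis add_diff_cancel_right' of_nat_add of_nat_mult)
  have r: "int su * int u - (int t - 2) * int st - (int v - 2) * int sv = 2*D"
    unfolding D_def hs by (simp add: algebra_simps)
  have Dpos: "D > 0" using assms(3) r by simp
  obtain k where k: "2 * real sv / real_of_int (2*D) = of_int k"
    using assms(4) r by (metis Ints_cases)
  have "real sv = of_int k * of_int D" using k Dpos by (simp add: field_simps)
  then have svk: "int sv = k * D" by (metis of_int_eq_iff of_int_mult of_int_of_nat_eq)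
  have k0: "k \<ge> 0" using svk Dpos by (metis of_nat_0_le_iff zero_le_mult_iff linorder_not_less)
  define b where "b = nat k"
  define d where "d = nat D"
  have "int sv = int b * int d" using svk k0 Dpos by (simp add: b_def d_def)
  then have sv: "sv = b*d" by (metis of_nat_eq_iff of_nat_mult)
  have "int st = D + int sv * (int v - 1)" unfolding D_def by (simp add: algebra_simps)
  also have "\<dots> = int d * (int b * (int v - 1) + 1)" using sv Dpos by (simp add: d_def algebra_simps)
  also have "\<dots> = int (d*(b*(v-1)+1))"
  proof -
    have "int (v-1) = int v - 1" using assms(1) by simp
    then show ?thesis by (simp only: of_nat_mult of_nat_add of_nat_1)
  qed
  finally have "st = d*(b*(v-1)+1)" by (metis of_nat_eq_iff)
  moreover have "d > 0" using Dpos d_def by simp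
  ultimately show ?thesis using sv by blast
qed



lemma sum_replicate_set: "finite A \<Longrightarrow> (\<Sum>i\<in>A. replicate_mset k x) = replicate_mset (card A * k) x"
  by (induction A rule: finite_induct) (simp_all add: replicate_mset_add)

lemma core:
  fixes t u v st su sv b d :: nat and XT XU XV a :: real
  assumes t2: "t \<ge> 2" and u2: "u \<ge> 2" and v1: "v \<ge> 1"
    and vcase: "v = 1 \<longrightarrow> v*sv \<le> (t-2)*st" and su0: "su > 0" and d0: "d > 0"
    and svbd: "sv = b*d" and stdef: "st = d*(b*(v-1)+1)" and cnt: "su*u + sv*v = st*t"
    and xs: "real su * XU + real sv * XV = real st * XT" and adef: "a = XU / real u"
    and alt: "a < XV / real v"
  shows "\<exists>T U V. rows_sum st t T XT \<and> rows_sum su u U XU \<and> rows_sum sv v V XV \<and>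
      entries st t T = entries su u U + entries sv v V \<and> U = (\<lambda>_ _. a) \<and> (\<forall>i<sv. \<forall>j<v. V i j > a)"
proof -
  define m where "m = b*(v-1)+1"
  define E where "E = XT - real t * a"
  define Ev where "Ev = XV - real v * a"
  have XU: "XU = real u * a" using adef u2 by simp
  have Evpos: "Ev > 0" using alt v1 unfolding Ev_def by (simp add: field_simps)
  have "real st * E = real sv * Ev"
  proof -
    have "real (su*u) = real (st*t) - real (sv*v)" using cnt by (metis add_diff_cancel_right' of_nat_add)
    then have "real su * real u = real st * real t - real sv * real v" by simp
    then have e1: "real su * real u * a = real st * real t * a - real sv * real v * a"
      by (metis left_diff_distrib)
    have e2: "real st * XT = real su * real u * a + real sv * XV" using xs unfolding XU by (simp add: algebra_simps)
    have "real st * E = real st * XT - real st * real t * a" by (simp add: E_def algebra_simps)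
    also have "\<dots> = real sv * XV - real sv * real v * a" using e1 e2 by linarith
    finally show ?thesis by (simp add: Ev_def algebra_simps)
  qed
  moreover have "real st = real d * real m" unfolding stdef m_def by (simp only: of_nat_mult)
  moreover have "real sv = real d * real b" unfolding svbd by (simp add: mult.commute)
  ultimately have "real d * (real m * E) = real d * (real b * Ev)" by (simp add: mult.assoc)
  then have mE: "real m * E = real b * Ev" using d0 by simp
  have rconst: "rows_sum s c (\<lambda>_ _. x) (real c * x)" for s c x unfolding rows_sum_def by simp
  show ?thesis
  proof (cases "b = 0")
    case True
    then have sv0: "sv = 0" and m1: "m = 1" using svbd m_def by auto
    then have E0: "E = 0" using mE True by simp
    have XT: "XT = real t * a" using E0 E_def by simp
    have "rows_sum st t (\<lambda>_ _. a) XT" using rconst XT by simp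
    moreover have "rows_sum su u (\<lambda>_ _. a) XU" using rconst XU by simp
    moreover have "rows_sum sv v (\<lambda>_ _. a+1) XV" using sv0 unfolding rows_sum_def by simp
    moreover have "entries st t (\<lambda>_ _. a) = entries su u (\<lambda>_ _. a) + entries sv v (\<lambda>_ _. a+1)"
      using sv0 cnt by (simp add: entries_const)
    ultimately show ?thesis using sv0 by blast
  next
    case bpos: False
    show ?thesis
    proof (cases "v = 1")
      case True
      then have m1: "m = 1" and std: "st = d" using m_def stdef by auto
      have "b*d \<le> (t-2)*d" using vcase True svbd std by simp
      then have bt: "b \<le> t - 2" using d0 by simp
      have EbEv: "E = real b * Ev" using mE m1 by simp
      define Trow where "Trow = replicate b (a+Ev) @ replicate (t-b) a"
      have lT: "length Trow = t" using bt t2 unfolding Trow_def by (simp add: sum_list_replicate)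
      have "rows_sum st t (\<lambda>i q. Trow ! q) XT"
      proof -
        have "sum_list Trow = real b * (a+Ev) + real (t-b) * a" unfolding Trow_def by (simp add: sum_list_replicate)
        also have "\<dots> = XT" using bt t2 EbEv unfolding E_def by (simp add: of_nat_diff algebra_simps)
        finally show ?thesis unfolding rows_sum_def using rowsum_list[OF lT] by simp
      qed
      moreover have "rows_sum su u (\<lambda>_ _. a) XU" using rconst XU by simp
      moreover have "rows_sum sv v (\<lambda>_ _. a+Ev) XV" using rconst[of sv v "a+Ev"] True
        unfolding Ev_def by simp
      moreover have "entries st t (\<lambda>i q. Trow ! q) = entries su u (\<lambda>_ _. a) + entries sv v (\<lambda>_ _. a+Ev)"
      proof -
        have "entries st t (\<lambda>i q. Trow ! q) = (\<Sum>i<st. replicate_mset b (a+Ev) + replicate_mset (t-b) a)"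
          using entries_list[of st "\<lambda>_. Trow" t] lT unfolding Trow_def by (simp add: sum_list_replicate)
        also have "\<dots> = replicate_mset (st*b) (a+Ev) + replicate_mset (st*(t-b)) a"
          by (simp add: sum.distrib sum_replicate)
        also have "st*(t-b) = su*u" using cnt True svbd std by (simp add: diff_mult_distrib2 mult.commute)
        also have "st*b = sv*v" using True svbd std by simp
        finally show ?thesis by (simp add: entries_const add.commute)
      qed
      moreover have "\<forall>i<sv. \<forall>j<v. (\<lambda>_ _. a+Ev) i j > a" using Evpos by simp
      ultimately show ?thesis by blast
    next
      case False
      then have v2: "v \<ge> 2" using v1 by simp
      have b1: "b \<ge> 1" using bpos by simp
      define w where "w = E / real b"
      have Ebw: "E = real b * w" using bpos unfolding w_def by simp
      have Evmw: "Ev = real m * w" using mE bpos unfolding Ebw by (simp add: algebra_simps)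
      have mpos: "real m > 0" unfolding m_def by (simp add: add_pos_nonneg)
      have wpos: "w > 0" using Evmw Evpos mpos zero_less_mult_pos by metis
      define c where "c r = (if r \<le> b then r else 0)" for r
      have cle: "c r \<le> b" for r unfolding c_def by simp
      define Trow where "Trow r = (a + real (c r) * w) # (a + real (b - c r) * w) # replicate (t-2) a" for r
      define Vrow where "Vrow j = (a + real (b-j) * w) # (a + real (j+1) * w) # replicate (v-2) (a + real b * w)" for j
      have lT: "length (Trow r) = t" for r unfolding Trow_def using t2 by simp
      have lV: "length (Vrow j) = v" for j unfolding Vrow_def using v2 by simp
      have "rows_sum st t (\<lambda>i q. Trow (i mod m) ! q) XT"
        unfolding rows_sum_def
      proof (intro allI impI)
        fix i
        have "sum_list (Trow (i mod m)) = 2*a + (real (c (i mod m)) + real (b - c (i mod m))) * w + real (t-2) * a"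
          unfolding Trow_def by (simp add: sum_list_replicate algebra_simps)
        also have "real (c (i mod m)) + real (b - c (i mod m)) = real b" using cle by (simp add: of_nat_diff)
        also have "2*a + real b * w + real (t-2) * a = XT" using t2 unfolding E_def Ebw[symmetric]
          by (simp add: of_nat_diff algebra_simps)
        finally show "(\<Sum>q<t. Trow (i mod m) ! q) = XT" using rowsum_list[OF lT] by simp
      qed
      moreover have "rows_sum su u (\<lambda>_ _. a) XU" using rconst XU by simp
      moreover have "rows_sum sv v (\<lambda>i q. Vrow (i mod b) ! q) XV"
        unfolding rows_sum_def
      proof (intro allI impI)
        fix i assume "i < sv"
        define j where "j = i mod b"
        have jb: "j < b" using bpos j_def by simp
        have "sum_list (Vrow j) = 2*a + (real (b-j) + real (j+1)) * w + real (v-2) * (a + real b * w)"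
          unfolding Vrow_def by (simp add: sum_list_replicate algebra_simps)
        also have "real (b-j) + real (j+1) = real b + 1" using jb by (simp add: of_nat_diff)
        also have "2*a + (real b + 1) * w + real (v-2) * (a + real b * w) = XV"
        proof -
          have rm: "real m = real b * (real v - 1) + 1" unfolding m_def using v1 by (simp add: of_nat_diff)
          have XV: "XV = real v * a + real m * w" using Ev_def Evmw by simp
          show ?thesis using v2 unfolding XV rm
            by (simp add: of_nat_diff algebra_simps)
        qed
        finally show "(\<Sum>q<v. Vrow (i mod b) ! q) = XV" using rowsum_list[OF lV] j_def by simp
      qed
      moreover have "entries st t (\<lambda>i q. Trow (i mod m) ! q) = entries su u (\<lambda>_ _. a) + entries sv v (\<lambda>i q. Vrow (i mod b) ! q)"
      proof -
        define n where "n = m*t - b*v"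
        define K where "K = b*(v-2)"
        obtain v' t' where vv: "v = v'+2" and tt: "t = t'+2" using v2 t2 by (metis add.commute le_Suc_ex)
        have nK: "n = 1 + 1 + (b+1)*(t-2) + K + K*(t-2)"
          unfolding n_def K_def m_def vv tt by (simp add: algebra_simps)
        have mK: "m = Suc b + K" unfolding m_def K_def vv by (simp add: algebra_simps)
        have suu: "su*u = d*n"
        proof -
          have "su*u = st*t - sv*v" using cnt by simp
          also have "\<dots> = d*(m*t) - d*(b*v)" unfolding stdef svbd m_def by (simp add: algebra_simps)
          finally show ?thesis unfolding n_def by (simp add: diff_mult_distrib2)
        qed
        define g where "g j = {#a + real j * w#}" for j
        define S where "S = (\<Sum>j<b. g (Suc j))"
        have mT1: "mset (Trow r) = g r + g (b-r) + replicate_mset (t-2) a" if "r \<le> b" for r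
          using that unfolding Trow_def g_def c_def by simp
        have mT2: "mset (Trow r) = replicate_mset (t-1) a + replicate_mset 1 (a + real b * w)" if "b < r" for r
        proof -
          have "t - 1 = Suc (t-2)" using t2 by simp
          then show ?thesis using that unfolding Trow_def c_def by simp
        qed
        have mV: "mset (Vrow j) = g (b-j) + g (Suc j) + replicate_mset (v-2) (a + real b * w)" for j
          unfolding Vrow_def g_def by simp
        have shift: "(\<Sum>r<Suc k. g r) = g 0 + (\<Sum>r<k. g (Suc r))" for k
          by (induction k) (simp_all add: add.assoc)
        have BT: "(\<Sum>r<m. mset (Trow r)) = replicate_mset n a + ((S + S) + replicate_mset K (a + real b * w))"
        proof -
          have split: "{..<m} = {..<Suc b} \<union> {Suc b..<m}" using mK by auto
          have "(\<Sum>r<m. mset (Trow r)) = (\<Sum>r<Suc b. mset (Trow r)) + (\<Sum>r\<in>{Suc b..<m}. mset (Trow r))"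
            unfolding split by (rule sum.union_disjoint) auto
          also have "(\<Sum>r<Suc b. mset (Trow r)) = (\<Sum>r<Suc b. g r) + (\<Sum>r<Suc b. g (b-r)) + (\<Sum>r<Suc b. replicate_mset (t-2) a)"
            using mT1 by (simp add: sum.distrib)
          also have "(\<Sum>r<Suc b. g (b-r)) = (\<Sum>r<Suc b. g r)"
            using sum.nat_diff_reindex[of g "Suc b"] by simp
          also have "(\<Sum>r<Suc b. g r) = g 0 + S" unfolding S_def shift ..
          also have "(\<Sum>r\<in>{Suc b..<m}. mset (Trow r)) = (\<Sum>r\<in>{Suc b..<m}. replicate_mset (t-1) a + replicate_mset 1 (a + real b * w))"
            using mT2 by (intro sum.cong) auto
          also have "\<dots> = replicate_mset (K*(t-1)) a + replicate_mset K (a + real b * w)"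
          proof -
            have cardK: "card {Suc b..<m} = K" using mK by simp
            show ?thesis by (simp only: sum.distrib sum_replicate_set[OF finite_atLeastLessThan] cardK mult_1_right)
          qed
          also have "(\<Sum>r<Suc b. replicate_mset (t-2) a) = replicate_mset ((b+1)*(t-2)) a"
            by (simp add: sum_replicate)
          also have "K*(t-1) = K + K*(t-2)" unfolding tt by simp
          finally show ?thesis unfolding nK g_def by (simp add: replicate_mset_add ac_simps)
        qed
        have BV: "(\<Sum>j<b. mset (Vrow j)) = (S + S) + replicate_mset K (a + real b * w)"
        proof -
          have "(\<Sum>j<b. mset (Vrow j)) = (\<Sum>j<b. g (b-j)) + S + (\<Sum>j<b. replicate_mset (v-2) (a + real b * w))"
            unfolding mV S_def by (simp add: sum.distrib)
          also have "(\<Sum>j<b. g (b-j)) = S"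
          proof -
            have "(\<Sum>j<b. g (b-j)) = (\<Sum>j<b. (g \<circ> Suc) (b - Suc j))"
              by (intro sum.cong) (auto simp: Suc_diff_Suc)
            also have "\<dots> = S" unfolding S_def using sum.nat_diff_reindex[of "g \<circ> Suc" b] by simp
            finally show ?thesis .
          qed
          finally show ?thesis unfolding K_def by (simp add: sum_replicate ac_simps)
        qed
        have "entries st t (\<lambda>i q. Trow (i mod m) ! q) = (\<Sum>i<d*m. mset (Trow (i mod m)))"
          using entries_list[of st "\<lambda>i. Trow (i mod m)" t] lT unfolding stdef m_def by simp
        also have "\<dots> = (\<Sum>k<d. \<Sum>r<m. mset (Trow r))" by (rule sum_mod_blocks)
        also have "\<dots> = (\<Sum>k<d. replicate_mset n a) + (\<Sum>k<d. \<Sum>j<b. mset (Vrow j))"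
          unfolding BT BV by (simp add: sum.distrib)
        also have "(\<Sum>k<d. replicate_mset n a) = entries su u (\<lambda>_ _. a)"
          by (simp add: sum_replicate entries_const suu)
        also have "(\<Sum>k<d. \<Sum>j<b. mset (Vrow j)) = (\<Sum>i<d*b. mset (Vrow (i mod b)))"
          by (rule sum_mod_blocks[symmetric])
        also have "\<dots> = entries sv v (\<lambda>i q. Vrow (i mod b) ! q)"
          using entries_list[of sv "\<lambda>i. Vrow (i mod b)" v] lV unfolding svbd by (simp add: mult.commute)
        finally show ?thesis .
      qed
      moreover have "\<forall>i<sv. \<forall>j<v. (\<lambda>i q. Vrow (i mod b) ! q) i j > a"
      proof (intro allI impI)
        fix i j assume "i < sv" "j < v"
        have "x > a" if "x \<in> set (Vrow (i mod b))" for x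
        proof -
          have "i mod b < b" using bpos by simp
          then have "real (b - i mod b) > 0" by simp
          then show ?thesis using that wpos b1 unfolding Vrow_def
            by (auto split: if_splits simp: add_pos_pos)
        qed
        then show "(\<lambda>i q. Vrow (i mod b) ! q) i j > a" using lV \<open>j < v\<close> by simp
      qed
      ultimately show ?thesis by blast
    qed
  qed
qed



theorem theorem5:
  fixes t u v st su sv :: nat and xt xu xv :: rat
  assumes "is_3MDAP t u v st su sv xt xu xv"
    and "int su * int u - (int t - 2) * int st - (int v - 2) * int sv > 0"
    and "2 * real sv / real_of_int (int su * int u - (int t - 2) * int st - (int v - 2) * int sv) \<in> \<int>"
  shows "(\<forall>T U V. feasible_3MDAP t u v st su sv xt xu xv T U V \<longrightarrow>
              min_entry st t T \<le> real_of_rat (xu / of_nat u))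
       \<and> f_3MDAP t u v st su sv xt xu xv = real_of_rat (xu / of_nat u)
       \<and> (\<exists>T U V. optimal_3MDAP t u v st su sv xt xu xv T U V \<and>
              (\<forall>i<sv. \<forall>j<v. V i j > real_of_rat (xu / of_nat u)))"
proof -
  note H = assms(1)[unfolded is_3MDAP_def]
  have t2: "t \<ge> 2" and u2: "u \<ge> 2" and v1: "v \<ge> 1" and vcase: "v = 1 \<longrightarrow> v*sv \<le> (t-2)*st"
    and st0: "st > 0" and su0: "su > 0" and cnt: "su*u + sv*v = st*t"
    and hx: "of_nat su * xu + of_nat sv * xv = of_nat st * xt" and hlt: "xu / of_nat u < xv / of_nat v"
    using H by auto
  define XT where "XT = real_of_rat xt"
  define XU where "XU = real_of_rat xu"
  define XV where "XV = real_of_rat xv"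
  define a where "a = real_of_rat (xu / of_nat u)"
  have adef: "a = XU / real u" unfolding a_def XU_def by (simp add: of_rat_divide)
  have xs: "real su * XU + real sv * XV = real st * XT"
  proof -
    have "real_of_rat (of_nat su * xu + of_nat sv * xv) = real_of_rat (of_nat st * xt)" using hx by simp
    then show ?thesis unfolding XT_def XU_def XV_def by (simp add: of_rat_add of_rat_mult)
  qed
  have alt: "a < XV / real v"
  proof -
    have "real_of_rat (xu / of_nat u) < real_of_rat (xv / of_nat v)" using hlt by (simp add: of_rat_less)
    then show ?thesis unfolding a_def XV_def by (simp add: of_rat_divide)
  qed
  obtain b d where d0: "d > 0" and svbd: "sv = b*d" and stdef: "st = d*(b*(v-1)+1)"
    using setup_bd[OF v1 cnt assms(2) assms(3)] by blast
  have ub: "min_entry st t T \<le> a" if fe: "feasible_3MDAP t u v st su sv xt xu xv T U V" for T U V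
  proof -
    have rs: "(\<Sum>j<u. U 0 j) = XU" and eq: "entries st t T = entries su u U + entries sv v V"
      using fe su0 unfolding feasible_3MDAP_def rows_sum_def XU_def by auto
    have "\<exists>j<u. U 0 j \<le> a"
    proof (rule ccontr)
      assume "\<not> ?thesis"
      then have "\<forall>j\<in>{..<u}. a < U 0 j" by auto
      then have "(\<Sum>j<u. a) < (\<Sum>j<u. U 0 j)" using u2 by (intro sum_strict_mono) (auto simp: lessThan_empty_iff)
      then show False using rs adef u2 by simp
    qed
    then obtain j where j: "j < u" "U 0 j \<le> a" by blast
    have "U 0 j \<in> set_mset (entries su u U)" using j su0 unfolding entries_set[symmetric] by force
    then have "U 0 j \<in> set_mset (entries st t T)" using eq by simp
    then have "min_entry st t T \<le> U 0 j" unfolding min_entry_set by simp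
    then show ?thesis using j by simp
  qed
  obtain T U V where fT: "rows_sum st t T XT" and fU: "rows_sum su u U XU" and fV: "rows_sum sv v V XV"
    and eq: "entries st t T = entries su u U + entries sv v V" and Ua: "U = (\<lambda>_ _. a)"
    and Vgt: "\<forall>i<sv. \<forall>j<v. V i j > a"
    using core[OF t2 u2 v1 vcase su0 d0 svbd stdef cnt xs adef alt] by blast
  have fe: "feasible_3MDAP t u v st su sv xt xu xv T U V"
    unfolding feasible_3MDAP_def using fT fU fV eq XT_def XU_def XV_def by simp
  have mina: "min_entry st t T = a"
    unfolding min_entry_set eq
  proof (rule Min_eqI)
    show "finite (set_mset (entries su u U + entries sv v V))" by simp
  next
    fix y assume "y \<in> set_mset (entries su u U + entries sv v V)"
    then have "y \<in> set_mset (entries su u U) \<or> y \<in> set_mset (entries sv v V)" by simp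
    then show "a \<le> y"
    proof
      assume "y \<in> set_mset (entries su u U)"
      then show ?thesis unfolding Ua entries_const by (simp split: if_splits)
    next
      assume "y \<in> set_mset (entries sv v V)"
      then obtain i j where "i < sv" "j < v" "y = V i j" unfolding entries_set[symmetric] by auto
      then show ?thesis using Vgt by force
    qed
  next
    have "su * u > 0" using su0 u2 by simp
    then show "a \<in> set_mset (entries su u U + entries sv v V)" unfolding Ua entries_const by simp
  qed
  have fval: "f_3MDAP t u v st su sv xt xu xv = a"
    unfolding f_3MDAP_def
  proof (rule Greatest_equality)
    show "\<exists>T U V. feasible_3MDAP t u v st su sv xt xu xv T U V \<and> a = min_entry st t T"
      using fe mina by metis
  next
    fix y assume "\<exists>T U V. feasible_3MDAP t u v st su sv xt xu xv T U V \<and> y = min_entry st t T"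
    then show "y \<le> a" using ub by blast
  qed
  have "optimal_3MDAP t u v st su sv xt xu xv T U V" unfolding optimal_3MDAP_def using fe mina fval by simp
  then show ?thesis using ub fval Vgt unfolding a_def by blast
qed


end
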